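(* Let $X$ be an Alexandroff space, $Y$ a topological space, and $f:X\to Y$ a map with closed graph. Then $f$ is continuous.
   Context: For a map $f:X\to Y$ its graph is $G_f=\{(x,f(x)):x\in X\}$; $f$ has closed graph if $G_f$ is closed in $X\times Y$ (product topology). A topological space $X$ is an Alexandroff space if the intersection of every nonempty family of open subsets of $X$ is open; equivalently, every point $a\in X$ has a smallest open neighbourhood, denoted $V_a$. *)

theory Defs
  imports "HOL-Analysis.Analysis"
begin

definition alexandroff_space :: "'a topology \<Rightarrow> bool" where
  "alexandroff_space X \<longleftrightarrow>
     (\<forall>\<F>. \<F> \<noteq> {} \<and> (\<forall>U\<in>\<F>. openin X U) \<longrightarrow> openin X (\<Inter>\<F>))"

definition graph_on :: "'a topology \<Rightarrow> ('a \<Rightarrow> 'b) \<Rightarrow> ('a \<times> 'b) set" where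
  "graph_on X f = {(x, f x) | x. x \<in> topspace X}"

end

theory Submission
  imports Defs
begin

theorem theorem3p2:
  fixes X :: "'a topology" and Y :: "'b topology" and f :: "'a \<Rightarrow> 'b"
  assumes "alexandroff_space X"
    and "f \<in> topspace X \<rightarrow> topspace Y"
    and "closedin (prod_topology X Y) (graph_on X f)"
  shows "continuous_map X Y f"
proof -
  let ?G = "graph_on X f"
  have opc: "openin (prod_topology X Y) (topspace (prod_topology X Y) - ?G)"
    using assms(3) by (simp add: closedin_def)
  have const: "f y = f x" if x: "x \<in> topspace X" and y: "y \<in> \<Inter>{A. openin X A \<and> x \<in> A}" for x y
  proof (rule ccontr)
    assume ne: "f y \<noteq> f x"
    have yX: "y \<in> topspace X" using y x by auto
    have fy: "f y \<in> topspace Y" using assms(2) yX by auto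
    have "(x, f y) \<in> topspace (prod_topology X Y) - ?G"
      using x fy ne by (auto simp: graph_on_def)
    then obtain U V where UV: "openin X U" "openin Y V" "x \<in> U" "f y \<in> V"
        "U \<times> V \<subseteq> topspace (prod_topology X Y) - ?G"
      using opc by (metis openin_prod_topology_alt)
    have "y \<in> U" using y UV by auto
    hence "(y, f y) \<in> U \<times> V" using UV by auto
    moreover have "(y, f y) \<in> ?G" using yX by (auto simp: graph_on_def)
    ultimately show False using UV(5) by auto
  qed
  show ?thesis unfolding continuous_map_def
  proof (intro conjI allI impI)
    show "f \<in> topspace X \<rightarrow> topspace Y" by fact
    fix U assume U: "openin Y U"
    show "openin X {x \<in> topspace X. f x \<in> U}"
    proof (subst openin_subopen, intro ballI)
      fix x assume xs: "x \<in> {x \<in> topspace X. f x \<in> U}"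
      let ?T = "\<Inter>{A. openin X A \<and> x \<in> A}"
      have "openin X ?T"
        using assms(1) xs unfolding alexandroff_space_def
        by (metis (mono_tags, lifting) empty_Collect_eq mem_Collect_eq openin_topspace)
      moreover have "x \<in> ?T" by auto
      moreover have "?T \<subseteq> {x \<in> topspace X. f x \<in> U}"
      proof
        fix y assume y: "y \<in> ?T"
        have "y \<in> topspace X" using y xs by auto
        moreover have "f y = f x" using const xs y by auto
        ultimately show "y \<in> {x \<in> topspace X. f x \<in> U}" using xs by auto
      qed
      ultimately show "\<exists>T. openin X T \<and> x \<in> T \<and> T \<subseteq> {x \<in> topspace X. f x \<in> U}" by blast
    qed
  qed
qed

end
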